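(* Let $N\ge1$. The set $\mathfrak{T}_N:=\{T_\Lambda:\Lambda\subseteq P_N\}$ is a subgroup of $\mathrm{Aut}(\mathbb{D}_N)_\pi\cap\mathrm{C}(\mathfrak{M}_N)$ isomorphic to $\{\pm1\}^N$, and $T_{\Lambda_1}T_{\Lambda_2}=T_{\Lambda_1\oplus\Lambda_2}$ for all $\Lambda_1,\Lambda_2\subseteq P_N$. Furthermore, $\mathfrak{T}_N$ acts on $\mathcal{E}$ by composition on the right ($\epsilon\mapsto\epsilon\circ T_\Lambda\in\mathcal{E}$), and $$F_N\big(u,T_\Lambda(w,a,\theta)\big)=(-1)^{|\Lambda|}\mathrm{e}\big(\mathrm{Tr}(\theta,\Lambda)\big)F_N(u,w,a,\theta)$$ for all $(w,a,\theta)\in\mathbb{D}_N$ and all $u\in\mathbb{C}$ away from singularities.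
   Context: $\mathrm{e}(z):=\mathrm{e}^{2\pi iz}$, $P_N=\{1,\dots,N\}$; vectors are functions on $P_N$, $v^{-1}[S]=\{\ell:v_\ell\in S\}$, $\mathrm{Tr}(v,\Lambda):=\sum_{\ell\in\Lambda}v_\ell$; $\oplus$ is symmetric difference. $\mathcal{C}:=\{z:\mathrm{Re}(z)>0\text{ or }z\in i\mathbb{R}_{>0}\}$. $\mathbb{D}_N:=\{(w,a,\theta)\in\mathbb{C}\times\mathbb{C}^N\times\mathbb{R}^N:a^{-1}[0]\subseteq\theta^{-1}[\mathbb{R}\smallsetminus\mathbb{Z}]\}$; $\pi(w,a,\theta):=w-\mathrm{Tr}(a,a^{-1}[-\mathcal{C}])$. $\mathrm{Aut}(\mathbb{D}_N)$: homeomorphisms of $\mathbb{D}_N$; $\mathrm{Aut}(\mathbb{D}_N)_\pi:=\{g:\pi\circ g=\pi\}$. $M_\alpha(w,a,\theta):=(\alpha w,\alpha a,\theta)$, $\mathfrak{M}_N=\{M_\alpha:\alpha\in\mathbb{C}^*\}$, $\mathrm{C}(\mathfrak{M}_N)$ its centralizer in $\mathrm{Aut}(\mathbb{D}_N)$. $T_\Lambda(w,a,\theta):=(w-\mathrm{Tr}(a,\Lambda),a\,d(\Lambda),\theta\,d(\Lambda))$ with $d(\Lambda)$ the diagonal matrix with entry $-1$ at $\ell\in\Lambda$ and $1$ otherwise. $F_N(u,w,a,\theta):=\mathrm{e}^{-uw}\prod_\ell(1-\mathrm{e}(\theta_\ell)\mathrm{e}^{-ua_\ell})^{-1}$. $\mathcal{E}$: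 the set of $\epsilon:\mathbb{D}_N\to\mathbb{R}_{>0}$ such that for all $(w,a,\theta)$ and $\ell$, $\mathrm{e}(\theta_\ell)=\mathrm{e}^{ua_\ell}$ has no solution with $0<|u|\le\epsilon(w,a,\theta)$. *)

theory Defs
  imports "HOL-Analysis.Analysis" "HOL-Algebra.Group"
begin

text \<open>Index set P_N is the finite type 'n (N = CARD('n) >= 1).
  Points of the ambient space: (w, a, theta).\<close>

type_synonym 'n pt = "complex \<times> ('n \<Rightarrow> complex) \<times> ('n \<Rightarrow> real)"

definition ee :: "complex \<Rightarrow> complex" where
  "ee z = exp (2 * of_real pi * \<i> * z)"

definition symdiff :: "'a set \<Rightarrow> 'a set \<Rightarrow> 'a set" where
  "symdiff A B = (A - B) \<union> (B - A)"

definition Cset :: "complex set" where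
  "Cset = {z. Re z > 0 \<or> (Re z = 0 \<and> Im z > 0)}"

definition DD :: "('n::finite) pt set" where
  "DD = {(w, a, \<theta>). \<forall>l. a l = 0 \<longrightarrow> \<theta> l \<notin> \<int>}"

definition piD :: "('n::finite) pt \<Rightarrow> complex" where
  "piD p = (case p of (w, a, \<theta>) \<Rightarrow> w - (\<Sum>l\<in>{l. a l \<in> uminus ` Cset}. a l))"

definition Aut :: "(('n::finite) pt \<Rightarrow> 'n pt) monoid" where
  "Aut = \<lparr>carrier = {g. g \<in> extensional DD \<and> (\<exists>g'. homeomorphism DD DD g g')},
          mult = (\<lambda>f g. restrict (f \<circ> g) DD),
          one = restrict id DD\<rparr>"

definition Aut_pi :: "(('n::finite) pt \<Rightarrow> 'n pt) set" where
  "Aut_pi = {g \<in> carrier Aut. \<forall>x\<in>DD. piD (g x) = piD x}"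

definition MM :: "complex \<Rightarrow> ('n::finite) pt \<Rightarrow> 'n pt" where
  "MM \<alpha> p = (case p of (w, a, \<theta>) \<Rightarrow> (\<alpha> * w, \<lambda>l. \<alpha> * a l, \<theta>))"

definition CM :: "(('n::finite) pt \<Rightarrow> 'n pt) set" where
  "CM = {g \<in> carrier Aut. \<forall>\<alpha>. \<alpha> \<noteq> 0 \<longrightarrow> (\<forall>x\<in>DD. g (MM \<alpha> x) = MM \<alpha> (g x))}"

definition TT :: "('n::finite) set \<Rightarrow> 'n pt \<Rightarrow> 'n pt" where
  "TT \<Lambda> p = (case p of (w, a, \<theta>) \<Rightarrow>
     (w - (\<Sum>l\<in>\<Lambda>. a l),
      \<lambda>l. if l \<in> \<Lambda> then - a l else a l,
      \<lambda>l. if l \<in> \<Lambda> then - \<theta> l else \<theta> l))"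

definition TTgroup :: "(('n::finite) pt \<Rightarrow> 'n pt) set" where
  "TTgroup = {restrict (TT \<Lambda>) DD | \<Lambda>. True}"

definition PM :: "(('n::finite) \<Rightarrow> int) monoid" where
  "PM = \<lparr>carrier = {\<sigma>. \<forall>l. \<sigma> l \<in> {-1, 1}},
         mult = (\<lambda>\<sigma> \<tau> l. \<sigma> l * \<tau> l),
         one = (\<lambda>_. 1)\<rparr>"

definition FF :: "complex \<Rightarrow> ('n::finite) pt \<Rightarrow> complex" where
  "FF u p = (case p of (w, a, \<theta>) \<Rightarrow>
     exp (- u * w) * (\<Prod>l\<in>UNIV. 1 / (1 - ee (of_real (\<theta> l)) * exp (- u * a l))))"

definition EE :: "(('n::finite) pt \<Rightarrow> real) set" where
  "EE = {\<epsilon>. \<forall>p\<in>DD. \<epsilon> p > 0 \<and>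
          (case p of (w, a, \<theta>) \<Rightarrow> \<forall>l u. 0 < cmod u \<and> cmod u \<le> \<epsilon> p \<longrightarrow>
              ee (of_real (\<theta> l)) \<noteq> exp (u * a l))}"

end

theory Submission
  imports Defs
begin
lemma TT_DD: "p \<in> DD \<Longrightarrow> TT \<Lambda> p \<in> (DD :: ('n::finite) pt set)"
  unfolding DD_def TT_def
  by (cases p) (auto simp: minus_in_Ints_iff)

lemma ee_neg: "ee (- z) = inverse (ee z)"
  unfolding ee_def by (simp add: exp_minus[symmetric])

lemma ee_nz: "ee z \<noteq> 0" unfolding ee_def by simp

lemma ee_sum: "finite A \<Longrightarrow> ee (\<Sum>l\<in>A. f l) = (\<Prod>l\<in>A. ee (f l))"
  unfolding ee_def by (simp add: sum_distrib_left exp_sum)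

lemma EE_TT: "\<epsilon> \<in> EE \<Longrightarrow> \<epsilon> \<circ> TT \<Lambda> \<in> (EE :: (('n::finite) pt \<Rightarrow> real) set)"
proof -
  assume e: "\<epsilon> \<in> EE"
  show ?thesis unfolding EE_def
  proof (intro CollectI ballI)
    fix p :: "'n pt" assume pD: "p \<in> DD"
    obtain w a \<theta> where p: "p = (w, a, \<theta>)" by (cases p) auto
    have TD: "TT \<Lambda> p \<in> DD" using pD by (rule TT_DD[unfolded atomize_imp, rule_format])
    have T: "TT \<Lambda> p = (w - (\<Sum>l\<in>\<Lambda>. a l), \<lambda>l. if l \<in> \<Lambda> then - a l else a l, \<lambda>l. if l \<in> \<Lambda> then - \<theta> l else \<theta> l)"
      unfolding p TT_def by simp
    define E where "E = \<epsilon> (TT \<Lambda> p)"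
    have all: "0 < E \<and> (case TT \<Lambda> p of (w, a, \<theta>) \<Rightarrow> \<forall>l u. 0 < cmod u \<and> cmod u \<le> E \<longrightarrow>
              ee (of_real (\<theta> l)) \<noteq> exp (u * a l))"
      using bspec[OF e[unfolded EE_def mem_Collect_eq] TD] unfolding E_def .
    have pos: "\<epsilon> (TT \<Lambda> p) > 0" using all E_def by simp
    have H0: "\<forall>l u. 0 < cmod u \<and> cmod u \<le> E \<longrightarrow>
        ee (of_real (if l \<in> \<Lambda> then - \<theta> l else \<theta> l)) \<noteq> exp (u * (if l \<in> \<Lambda> then - a l else a l))"
      using all[THEN conjunct2] unfolding T by (simp only: prod.case)
    have H: "\<And>l u. 0 < cmod u \<and> cmod u \<le> \<epsilon> (TT \<Lambda> p) \<Longrightarrow>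
        ee (of_real (if l \<in> \<Lambda> then - \<theta> l else \<theta> l)) \<noteq> exp (u * (if l \<in> \<Lambda> then - a l else a l))"
      using H0 unfolding E_def by blast
    have "ee (of_real (\<theta> l)) \<noteq> exp (u * a l)" if "0 < cmod u \<and> cmod u \<le> \<epsilon> (TT \<Lambda> p)" for l u
    proof (cases "l \<in> \<Lambda>")
      case True
      from H[OF that, of l] True have "inverse (ee (of_real (\<theta> l))) \<noteq> inverse (exp (u * a l))"
        by (simp add: ee_neg exp_minus[symmetric])
      then show ?thesis by auto
    next
      case False
      from H[OF that, of l] False show ?thesis by simp
    qed
    then show "0 < (\<epsilon> \<circ> TT \<Lambda>) p \<and> (case p of (w, a, \<theta>) \<Rightarrow>
          \<forall>l u. 0 < cmod u \<and> cmod u \<le> (\<epsilon> \<circ> TT \<Lambda>) p \<longrightarrow> ee (complex_of_real (\<theta> l)) \<noteq> exp (u * a l))"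
      using pos by (simp add: p)
  qed
qed

lemma FF_TT:
  fixes \<Lambda> :: "('n::finite) set"
  assumes ne: "\<forall>l. ee (of_real (\<theta> l)) * exp (- u * a l) \<noteq> 1"
  shows "FF u (TT \<Lambda> (w, a, \<theta>)) = (-1) ^ card \<Lambda> * ee (of_real (\<Sum>l\<in>\<Lambda>. \<theta> l)) * FF u (w, a, \<theta>)"
proof -
  define x where "x = (\<lambda>l. ee (of_real (\<theta> l)) * exp (- u * a l))"
  have xnz: "x l \<noteq> 0" for l unfolding x_def by (simp add: ee_nz)
  have x1: "x l \<noteq> 1" for l using ne unfolding x_def by auto
  define f where "f = (\<lambda>l. 1 / (1 - x l))"
  have fac: "1 / (1 - ee (of_real (if l \<in> \<Lambda> then - \<theta> l else \<theta> l)) * exp (- u * (if l \<in> \<Lambda> then - a l else a l)))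
      = (if l \<in> \<Lambda> then - x l else 1) * f l" for l
  proof (cases "l \<in> \<Lambda>")
    case True
    have "ee (of_real (- \<theta> l)) * exp (- u * (- a l)) = inverse (x l)"
      unfolding x_def by (simp add: ee_neg exp_minus[symmetric] mult.commute)
    moreover have "1 / (1 - inverse (x l)) = - x l * (1 / (1 - x l))"
      using xnz[of l] x1[of l] by (simp add: field_simps)
    ultimately show ?thesis using True by (simp add: f_def)
  next
    case False then show ?thesis by (simp add: f_def x_def)
  qed
  have P1: "(\<Prod>l\<in>UNIV. (if l \<in> \<Lambda> then - x l else 1)) = (-1) ^ card \<Lambda> * (\<Prod>l\<in>\<Lambda>. x l)"
  proof -
    have "(\<Prod>l\<in>UNIV. (if l \<in> \<Lambda> then - x l else 1)) = (\<Prod>l\<in>\<Lambda>. - x l)"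
      by (simp add: prod.If_cases)
    also have "\<dots> = (\<Prod>l\<in>\<Lambda>. (-1) * x l)" by simp
    also have "\<dots> = (-1) ^ card \<Lambda> * (\<Prod>l\<in>\<Lambda>. x l)" by (simp only: prod.distrib prod_constant)
    finally show ?thesis .
  qed
  have P2: "(\<Prod>l\<in>\<Lambda>. x l) = ee (of_real (\<Sum>l\<in>\<Lambda>. \<theta> l)) * exp (- u * (\<Sum>l\<in>\<Lambda>. a l))"
    unfolding x_def by (simp add: of_real_sum ee_sum prod.distrib sum_distrib_left exp_sum)
  have "FF u (TT \<Lambda> (w, a, \<theta>)) = exp (- u * (w - (\<Sum>l\<in>\<Lambda>. a l))) *
      (\<Prod>l\<in>UNIV. (if l \<in> \<Lambda> then - x l else 1) * f l)"
    unfolding FF_def TT_def by (simp only: prod.case fac)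
  also have "\<dots> = exp (- u * w) * exp (u * (\<Sum>l\<in>\<Lambda>. a l)) * ((-1) ^ card \<Lambda> *
      (ee (of_real (\<Sum>l\<in>\<Lambda>. \<theta> l)) * exp (- u * (\<Sum>l\<in>\<Lambda>. a l)))) * (\<Prod>l\<in>UNIV. f l)"
    by (simp add: prod.distrib P1 P2 right_diff_distrib exp_diff exp_minus field_simps)
  also have "\<dots> = (-1) ^ card \<Lambda> * ee (of_real (\<Sum>l\<in>\<Lambda>. \<theta> l)) * (exp (- u * w) * (\<Prod>l\<in>UNIV. f l))"
    by (simp add: exp_minus field_simps)
  also have "\<dots> = (-1) ^ card \<Lambda> * ee (of_real (\<Sum>l\<in>\<Lambda>. \<theta> l)) * FF u (w, a, \<theta>)"
    unfolding FF_def f_def x_def by simp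
  finally show ?thesis .
qed
lemma TT_invol: "TT \<Lambda> (TT \<Lambda> p) = p"
  unfolding TT_def by (cases p) (auto simp: sum_negf)

lemma TT_comp: "TT \<Lambda>1 (TT \<Lambda>2 p) = TT (symdiff \<Lambda>1 \<Lambda>2) (p :: ('n::finite) pt)"
proof -
  obtain w a \<theta> where p: "p = (w, a, \<theta>)" by (cases p) auto
  have u1: "\<Lambda>1 = (\<Lambda>1 \<inter> \<Lambda>2) \<union> (\<Lambda>1 - \<Lambda>2)" by blast
  have s1: "(\<Sum>l\<in>\<Lambda>1. if l \<in> \<Lambda>2 then - a l else a l)
      = (\<Sum>l\<in>\<Lambda>1 - \<Lambda>2. a l) - (\<Sum>l\<in>\<Lambda>1 \<inter> \<Lambda>2. a l)"
  proof -
    have "(\<Sum>l\<in>\<Lambda>1. if l \<in> \<Lambda>2 then - a l else a l)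
       = (\<Sum>l\<in>\<Lambda>1 \<inter> \<Lambda>2. if l \<in> \<Lambda>2 then - a l else a l) + (\<Sum>l\<in>\<Lambda>1 - \<Lambda>2. if l \<in> \<Lambda>2 then - a l else a l)"
      by (subst u1, rule sum.union_disjoint) auto
    also have "\<dots> = - (\<Sum>l\<in>\<Lambda>1 \<inter> \<Lambda>2. a l) + (\<Sum>l\<in>\<Lambda>1 - \<Lambda>2. a l)"
      by (simp add: sum_negf)
    finally show ?thesis by simp
  qed
  have u2: "\<Lambda>2 = (\<Lambda>2 - \<Lambda>1) \<union> (\<Lambda>1 \<inter> \<Lambda>2)" by blast
  have s2: "(\<Sum>l\<in>\<Lambda>2. a l) = (\<Sum>l\<in>\<Lambda>2 - \<Lambda>1. a l) + (\<Sum>l\<in>\<Lambda>1 \<inter> \<Lambda>2. a l)"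
    by (subst u2, rule sum.union_disjoint) auto
  have s3: "(\<Sum>l\<in>symdiff \<Lambda>1 \<Lambda>2. a l) = (\<Sum>l\<in>\<Lambda>1 - \<Lambda>2. a l) + (\<Sum>l\<in>\<Lambda>2 - \<Lambda>1. a l)"
    unfolding symdiff_def by (rule sum.union_disjoint) auto
  have "fst (TT \<Lambda>1 (TT \<Lambda>2 p)) = fst (TT (symdiff \<Lambda>1 \<Lambda>2) p)"
    unfolding p TT_def using s1 s2 s3 by simp
  moreover have "snd (TT \<Lambda>1 (TT \<Lambda>2 p)) = snd (TT (symdiff \<Lambda>1 \<Lambda>2) p)"
    unfolding p TT_def by (auto simp: symdiff_def fun_eq_iff)
  ultimately show ?thesis by (simp add: prod_eq_iff)
qed

lemma TT_cont: "continuous_on S (TT \<Lambda> :: ('n::finite) pt \<Rightarrow> 'n pt)"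
proof -
  have e: "TT \<Lambda> = (\<lambda>p. (fst p - (\<Sum>l\<in>\<Lambda>. fst (snd p) l),
      \<lambda>l. if l \<in> \<Lambda> then - fst (snd p) l else fst (snd p) l,
      \<lambda>l. if l \<in> \<Lambda> then - snd (snd p) l else snd (snd p) l))"
    unfolding TT_def by (auto simp: fun_eq_iff split: prod.splits)
  have c1: "continuous_on S (\<lambda>p::('n::finite) pt. fst (snd p) l)" for l
  proof -
    have "continuous_on S (\<lambda>p::('n::finite) pt. fst (snd p))"
      by (intro continuous_on_fst continuous_on_snd continuous_on_id)
    from continuous_on_product_then_coordinatewise[OF this] show ?thesis .
  qed
  have c2: "continuous_on S (\<lambda>p::('n::finite) pt. snd (snd p) l)" for l
  proof -
    have "continuous_on S (\<lambda>p::('n::finite) pt. snd (snd p))"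
      by (intro continuous_on_fst continuous_on_snd continuous_on_id)
    from continuous_on_product_then_coordinatewise[OF this] show ?thesis .
  qed
  have c3: "continuous_on S (\<lambda>p::('n::finite) pt. \<lambda>l. if l \<in> \<Lambda> then - fst (snd p) l else fst (snd p) l)"
  proof (rule continuous_on_coordinatewise_then_product)
    fix i show "continuous_on S (\<lambda>p::'n pt. if i \<in> \<Lambda> then - fst (snd p) i else fst (snd p) i)"
      by (cases "i \<in> \<Lambda>") (simp_all add: c1 continuous_on_minus)
  qed
  have c4: "continuous_on S (\<lambda>p::('n::finite) pt. \<lambda>l. if l \<in> \<Lambda> then - snd (snd p) l else snd (snd p) l)"
  proof (rule continuous_on_coordinatewise_then_product)
    fix i show "continuous_on S (\<lambda>p::'n pt. if i \<in> \<Lambda> then - snd (snd p) i else snd (snd p) i)"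
      by (cases "i \<in> \<Lambda>") (simp_all add: c2 continuous_on_minus)
  qed
  have c5: "continuous_on S (\<lambda>p::('n::finite) pt. fst p - (\<Sum>l\<in>\<Lambda>. fst (snd p) l))"
    by (intro continuous_intros c1)
  show ?thesis unfolding e
    by (intro continuous_on_Pair c3 c4 c5)
qed

lemma negC: "z \<in> uminus ` Cset \<longleftrightarrow> Re z < 0 \<or> (Re z = 0 \<and> Im z < 0)"
proof
  assume "z \<in> uminus ` Cset" then show "Re z < 0 \<or> (Re z = 0 \<and> Im z < 0)" by (auto simp: Cset_def)
next
  assume "Re z < 0 \<or> (Re z = 0 \<and> Im z < 0)"
  then have "-z \<in> Cset" by (auto simp: Cset_def)
  then show "z \<in> uminus ` Cset" by (metis image_eqI minus_minus)
qed

lemma piD_sum: "piD ((w, a, \<theta>) :: ('n::finite) pt) = w - (\<Sum>l\<in>UNIV. if a l \<in> uminus ` Cset then a l else 0)"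
  unfolding piD_def by (simp add: sum.If_cases Int_def)

lemma piD_TT: "piD (TT \<Lambda> p) = piD (p :: ('n::finite) pt)"
proof -
  obtain w a \<theta> where p: "p = (w, a, \<theta>)" by (cases p) auto
  define a' where "a' = (\<lambda>l. if l \<in> \<Lambda> then - a l else a l)"
  define g where "g = (\<lambda>l. if a' l \<in> uminus ` Cset then a' l else 0)"
  define h where "h = (\<lambda>l. if a l \<in> uminus ` Cset then a l else 0)"
  have kh: "(if l \<in> \<Lambda> then a l else 0) + g l = h l" for l
  proof (cases "l \<in> \<Lambda>")
    case True
    then show ?thesis unfolding g_def h_def a'_def negC
      by (cases "a l") (auto simp: complex_eq_iff)
  next
    case False
    then show ?thesis unfolding g_def h_def a'_def by simp
  qed
  have "(\<Sum>l\<in>UNIV. h l) = (\<Sum>l\<in>UNIV. (if l \<in> \<Lambda> then a l else 0)) + (\<Sum>l\<in>UNIV. g l)"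
    by (simp add: kh[symmetric] sum.distrib)
  also have "(\<Sum>l\<in>UNIV. (if l \<in> \<Lambda> then a l else 0)) = (\<Sum>l\<in>\<Lambda>. a l)"
    by (simp add: sum.If_cases)
  finally have "(\<Sum>l\<in>UNIV. h l) = (\<Sum>l\<in>\<Lambda>. a l) + (\<Sum>l\<in>UNIV. g l)" .
  note e1 = this
  have T: "TT \<Lambda> p = (w - (\<Sum>l\<in>\<Lambda>. a l), a', \<lambda>l. if l \<in> \<Lambda> then - \<theta> l else \<theta> l)"
    unfolding p TT_def a'_def by simp
  have e2: "piD (TT \<Lambda> p) = w - (\<Sum>l\<in>\<Lambda>. a l) - (\<Sum>l\<in>UNIV. g l)"
    unfolding T piD_sum g_def by simp
  have e3: "piD p = w - (\<Sum>l\<in>UNIV. h l)" unfolding p piD_sum h_def by simp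
  show ?thesis by (simp only: e1 e2 e3 diff_diff_eq)
qed

lemma TT_MM: "TT \<Lambda> (MM \<alpha> p) = MM \<alpha> (TT \<Lambda> (p :: ('n::finite) pt))"
  unfolding TT_def MM_def by (cases p) (auto simp: sum_distrib_left algebra_simps fun_eq_iff)

lemma MM_DD: "\<alpha> \<noteq> 0 \<Longrightarrow> p \<in> DD \<Longrightarrow> MM \<alpha> p \<in> (DD :: ('n::finite) pt set)"
  unfolding MM_def DD_def by (cases p) auto

lemma TT_empty: "TT {} p = p"
  unfolding TT_def by (cases p) auto

abbreviation RR :: "('n::finite) set \<Rightarrow> 'n pt \<Rightarrow> 'n pt" where
  "RR \<Lambda> \<equiv> restrict (TT \<Lambda>) DD"

lemma TT_DD': "p \<in> DD \<Longrightarrow> TT \<Lambda> p \<in> DD"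
  by (rule TT_DD)

lemma RR_homeo:
  fixes \<Lambda> :: "('n::finite) set"
  shows "homeomorphism DD DD (RR \<Lambda>) (RR \<Lambda>)"
proof -
  have img: "RR \<Lambda> ` DD = DD"
  proof
    show "RR \<Lambda> ` DD \<subseteq> DD" using TT_DD' by auto
    show "DD \<subseteq> RR \<Lambda> ` DD"
    proof
      fix x :: "'n pt" assume x: "x \<in> DD"
      then have "TT \<Lambda> x \<in> DD" by (rule TT_DD')
      moreover have "x = RR \<Lambda> (TT \<Lambda> x)" using calculation by (simp add: TT_invol)
      ultimately show "x \<in> RR \<Lambda> ` DD" by blast
    qed
  qed
  have cont: "continuous_on DD (RR \<Lambda>)"
    using continuous_on_cong[of DD DD "RR \<Lambda>" "TT \<Lambda>"] TT_cont by simp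
  have inv: "\<forall>x\<in>DD. RR \<Lambda> (RR \<Lambda> x) = x"
    by (simp add: TT_invol TT_DD')
  show ?thesis unfolding homeomorphism_def
    using img cont inv by blast
qed

lemma RR_carrier: "RR (\<Lambda>::('n::finite) set) \<in> carrier Aut"
proof -
  have "RR \<Lambda> \<in> {g. g \<in> extensional DD \<and> (\<exists>g'. homeomorphism DD DD g g')}"
    using RR_homeo[of \<Lambda>] by blast
  then show ?thesis by (simp add: Aut_def)
qed

lemma RR_mult: "RR \<Lambda>1 \<otimes>\<^bsub>Aut\<^esub> RR \<Lambda>2 = RR (symdiff \<Lambda>1 \<Lambda>2)"
proof -
  have "restrict (RR \<Lambda>1 \<circ> RR \<Lambda>2) DD = RR (symdiff \<Lambda>1 \<Lambda>2)"
    by (rule restrict_ext) (simp add: TT_DD' TT_comp)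
  then show ?thesis by (simp add: Aut_def)
qed

lemma Aut_one: "\<one>\<^bsub>Aut\<^esub> = RR {}"
proof -
  have "restrict id DD = RR {}"
    by (rule restrict_ext) (simp add: TT_empty)
  then show ?thesis by (simp add: Aut_def)
qed

lemma symdiff_self: "symdiff A A = {}" unfolding symdiff_def by auto

lemma RR_self: "RR \<Lambda> \<otimes>\<^bsub>Aut\<^esub> RR \<Lambda> = \<one>\<^bsub>Aut\<^esub>"
  unfolding RR_mult Aut_one symdiff_self ..

lemma RR_inv: "inv\<^bsub>Aut\<^esub> (RR (\<Lambda>::('n::finite) set)) = RR \<Lambda>"
  unfolding m_inv_def
proof (rule the_equality)
  show "RR \<Lambda> \<in> carrier Aut \<and> RR \<Lambda> \<otimes>\<^bsub>Aut\<^esub> RR \<Lambda> = \<one>\<^bsub>Aut\<^esub> \<and> RR \<Lambda> \<otimes>\<^bsub>Aut\<^esub> RR \<Lambda> = \<one>\<^bsub>Aut\<^esub>"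
    by (intro conjI RR_carrier RR_self)
next
  fix y assume y: "y \<in> carrier Aut \<and> RR \<Lambda> \<otimes>\<^bsub>Aut\<^esub> y = \<one>\<^bsub>Aut\<^esub> \<and> y \<otimes>\<^bsub>Aut\<^esub> RR \<Lambda> = \<one>\<^bsub>Aut\<^esub>"
  then have "y \<in> carrier Aut" by (rule conjunct1)
  then have "y \<in> {g. g \<in> extensional DD \<and> (\<exists>g'. homeomorphism DD DD g g')}"
    by (simp only: Aut_def partial_object.simps)
  then have ext: "y \<in> extensional DD" and hom: "\<exists>g'. homeomorphism DD DD y g'"
    by blast+
  from hom obtain g' where "homeomorphism DD DD y g'" by blast
  then have yimg: "y ` DD = DD" by (simp add: homeomorphism_def)
  have yD: "x \<in> DD \<Longrightarrow> y x \<in> DD" for x using yimg by blast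
  from y have "RR \<Lambda> \<otimes>\<^bsub>Aut\<^esub> y = \<one>\<^bsub>Aut\<^esub>" by (rule conjunct1[OF conjunct2])
  then have "RR \<Lambda> \<otimes>\<^bsub>Aut\<^esub> y = RR {}" unfolding Aut_one .
  then have r: "restrict (RR \<Lambda> \<circ> y) DD = RR {}" by (simp only: Aut_def monoid.simps)
  have eq: "TT \<Lambda> (y x) = x" if x: "x \<in> DD" for x
  proof -
    have "restrict (RR \<Lambda> \<circ> y) DD x = RR {} x" using fun_cong[OF r, of x] .
    then have "TT \<Lambda> (y x) = TT {} x"
      by (simp only: restrict_apply'[OF x] restrict_apply'[OF yD[OF x]] comp_apply)
    then show ?thesis by (simp only: TT_empty)
  qed
  show "y = RR \<Lambda>"
  proof
    fix x show "y x = RR \<Lambda> x"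
    proof (cases "x \<in> DD")
      case True
      have "y x = TT \<Lambda> (TT \<Lambda> (y x))" by (simp only: TT_invol)
      also have "\<dots> = TT \<Lambda> x" by (simp only: eq[OF True])
      also have "\<dots> = RR \<Lambda> x" by (simp only: restrict_apply'[OF True])
      finally show ?thesis .
    next
      case False
      have "y x = undefined" using ext False by (rule extensional_arb)
      moreover have "RR \<Lambda> x = undefined" using False by (simp only: restrict_apply if_False)
      ultimately show ?thesis by (rule trans[OF _ sym])
    qed
  qed
qed

lemma TTgroup_eq: "TTgroup = range RR"
  unfolding TTgroup_def by blast
lemma RR_inj:
  fixes A B :: "('n::finite) set"
  assumes "RR A = RR B" shows "A = B"
proof -
  define p0 where "p0 = ((0::complex), (\<lambda>_::'n. (1::complex)), (\<lambda>_::'n. (0::real)))"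
  have p0D: "p0 \<in> DD" unfolding p0_def DD_def by simp
  have "RR A p0 = RR B p0" using assms by simp
  then have e: "TT A p0 = TT B p0" using p0D by simp
  have "l \<in> A \<longleftrightarrow> l \<in> B" for l
  proof -
    have "fst (snd (TT A p0)) l = fst (snd (TT B p0)) l" using e by simp
    then have "(if l \<in> A then - 1 else 1 :: complex) = (if l \<in> B then - 1 else 1)"
      unfolding p0_def TT_def by simp
    then show "l \<in> A \<longleftrightarrow> l \<in> B" by (auto split: if_splits)
  qed
  then show ?thesis by blast
qed

lemma pm_set: "\<sigma> \<in> carrier (PM :: (('n::finite) \<Rightarrow> int) monoid) \<Longrightarrow> \<sigma> l = -1 \<or> \<sigma> l = 1"
  unfolding PM_def by auto

theorem lemma4:
  shows "subgroup (TTgroup :: (('n::finite) pt \<Rightarrow> 'n pt) set) (Aut :: ('n pt \<Rightarrow> 'n pt) monoid)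
    \<and> (TTgroup :: ('n pt \<Rightarrow> 'n pt) set) \<subseteq> Aut_pi \<inter> CM
    \<and> (\<exists>\<phi>. \<phi> \<in> iso (PM :: ('n \<Rightarrow> int) monoid) ((Aut :: ('n pt \<Rightarrow> 'n pt) monoid)\<lparr>carrier := TTgroup\<rparr>))
    \<and> (\<forall>\<Lambda>1 \<Lambda>2 :: 'n set. restrict (TT \<Lambda>1) DD \<otimes>\<^bsub>Aut\<^esub> restrict (TT \<Lambda>2) DD
           = restrict (TT (symdiff \<Lambda>1 \<Lambda>2)) DD)
    \<and> (\<forall>\<Lambda> :: 'n set. \<forall>\<epsilon> \<in> EE. \<epsilon> \<circ> TT \<Lambda> \<in> EE)
    \<and> (\<forall>\<Lambda> :: 'n set. \<forall>w a \<theta> u. (w, a, \<theta>) \<in> DD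
          \<longrightarrow> (\<forall>l. ee (of_real (\<theta> l)) * exp (- u * a l) \<noteq> 1)
          \<longrightarrow> FF u (TT \<Lambda> (w, a, \<theta>))
              = (-1) ^ card \<Lambda> * ee (of_real (\<Sum>l\<in>\<Lambda>. \<theta> l)) * FF u (w, a, \<theta>))"
proof (intro conjI)
  show "subgroup (TTgroup :: (('n::finite) pt \<Rightarrow> 'n pt) set) (Aut :: ('n pt \<Rightarrow> 'n pt) monoid)"
  proof (rule subgroup.intro)
    show "TTgroup \<subseteq> carrier (Aut :: ('n pt \<Rightarrow> 'n pt) monoid)"
      unfolding TTgroup_eq using RR_carrier by blast
  next
    fix x y :: "'n pt \<Rightarrow> 'n pt" assume "x \<in> TTgroup" "y \<in> TTgroup"
    then obtain A B where "x = RR A" "y = RR B" unfolding TTgroup_eq by blast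
    then show "x \<otimes>\<^bsub>Aut\<^esub> y \<in> TTgroup" unfolding TTgroup_eq by (simp add: RR_mult)
  next
    show "\<one>\<^bsub>Aut\<^esub> \<in> (TTgroup :: ('n pt \<Rightarrow> 'n pt) set)" unfolding TTgroup_eq Aut_one by blast
  next
    fix x :: "'n pt \<Rightarrow> 'n pt" assume "x \<in> TTgroup"
    then obtain A where "x = RR A" unfolding TTgroup_eq by blast
    then show "inv\<^bsub>Aut\<^esub> x \<in> TTgroup" unfolding TTgroup_eq by (simp add: RR_inv)
  qed
next
  show "(TTgroup :: ('n pt \<Rightarrow> 'n pt) set) \<subseteq> Aut_pi \<inter> CM"
  proof
    fix g :: "'n pt \<Rightarrow> 'n pt" assume "g \<in> TTgroup"
    then obtain A where g: "g = RR A" unfolding TTgroup_eq by blast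
    have "g \<in> Aut_pi" unfolding Aut_pi_def g using RR_carrier[of A]
      by (auto simp: piD_TT)
    moreover have "g \<in> CM" unfolding CM_def g using RR_carrier[of A]
      by (auto simp: TT_MM MM_DD)
    ultimately show "g \<in> Aut_pi \<inter> CM" by blast
  qed
next
  define \<phi> where "\<phi> = (\<lambda>\<sigma>::'n \<Rightarrow> int. RR {l. \<sigma> l = -1})"
  have hom: "\<phi> \<in> hom (PM :: ('n \<Rightarrow> int) monoid) ((Aut :: ('n pt \<Rightarrow> 'n pt) monoid)\<lparr>carrier := TTgroup\<rparr>)"
  proof (rule homI)
    fix \<sigma> :: "'n \<Rightarrow> int" show "\<phi> \<sigma> \<in> carrier (Aut\<lparr>carrier := TTgroup\<rparr>)"
      unfolding \<phi>_def TTgroup_eq by simp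
  next
    fix \<sigma> \<tau> :: "'n \<Rightarrow> int"
    assume s: "\<sigma> \<in> carrier PM" and t: "\<tau> \<in> carrier PM"
    have "{l. (\<sigma> \<otimes>\<^bsub>PM\<^esub> \<tau>) l = -1} = symdiff {l. \<sigma> l = -1} {l. \<tau> l = -1}"
    proof -
      have "l \<in> {l. (\<sigma> \<otimes>\<^bsub>PM\<^esub> \<tau>) l = -1} \<longleftrightarrow> l \<in> symdiff {l. \<sigma> l = -1} {l. \<tau> l = -1}" for l
      proof -
      have "\<sigma> l = -1 \<or> \<sigma> l = 1" "\<tau> l = -1 \<or> \<tau> l = 1" using pm_set s t by blast+
      then show "l \<in> {l. (\<sigma> \<otimes>\<^bsub>PM\<^esub> \<tau>) l = -1} \<longleftrightarrow> l \<in> symdiff {l. \<sigma> l = -1} {l. \<tau> l = -1}"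
        unfolding symdiff_def PM_def by auto
      qed
      then show ?thesis by blast
    qed
    then show "\<phi> (\<sigma> \<otimes>\<^bsub>PM\<^esub> \<tau>) = \<phi> \<sigma> \<otimes>\<^bsub>Aut\<lparr>carrier := TTgroup\<rparr>\<^esub> \<phi> \<tau>"
      unfolding \<phi>_def by (simp add: RR_mult)
  qed
  have inj: "inj_on \<phi> (carrier PM)"
  proof (rule inj_onI)
    fix \<sigma> \<tau> :: "'n \<Rightarrow> int"
    assume s: "\<sigma> \<in> carrier PM" and t: "\<tau> \<in> carrier PM" and e: "\<phi> \<sigma> = \<phi> \<tau>"
    have S: "{l. \<sigma> l = -1} = {l. \<tau> l = -1}" using e unfolding \<phi>_def by (rule RR_inj)
    show "\<sigma> = \<tau>"
    proof
      fix l
      have "\<sigma> l = -1 \<or> \<sigma> l = 1" "\<tau> l = -1 \<or> \<tau> l = 1" using pm_set s t by blast+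
      moreover have "\<sigma> l = -1 \<longleftrightarrow> \<tau> l = -1" using S by blast
      ultimately show "\<sigma> l = \<tau> l" by auto
    qed
  qed
  have img: "\<phi> ` carrier PM = carrier ((Aut :: ('n pt \<Rightarrow> 'n pt) monoid)\<lparr>carrier := TTgroup\<rparr>)"
  proof
    show "\<phi> ` carrier PM \<subseteq> carrier ((Aut :: ('n pt \<Rightarrow> 'n pt) monoid)\<lparr>carrier := TTgroup\<rparr>)"
      unfolding \<phi>_def TTgroup_eq by auto
  next
    show "carrier ((Aut :: ('n pt \<Rightarrow> 'n pt) monoid)\<lparr>carrier := TTgroup\<rparr>) \<subseteq> \<phi> ` carrier PM"
    proof
      fix g :: "'n pt \<Rightarrow> 'n pt" assume "g \<in> carrier (Aut\<lparr>carrier := TTgroup\<rparr>)"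
      then have "g \<in> range RR" unfolding TTgroup_eq by simp
      then obtain A where g: "g = RR A" by blast
      define \<sigma> where "\<sigma> = (\<lambda>l. if l \<in> A then -1 else 1 :: int)"
      have sc: "\<sigma> \<in> carrier PM" unfolding \<sigma>_def PM_def by auto
      have "{l. \<sigma> l = -1} = A" unfolding \<sigma>_def by auto
      then have "RR A = \<phi> \<sigma>" unfolding \<phi>_def by simp
      then show "g \<in> \<phi> ` carrier PM" unfolding g using sc by (rule image_eqI)
    qed
  qed
  show "\<exists>\<phi>. \<phi> \<in> iso (PM :: ('n \<Rightarrow> int) monoid) ((Aut :: ('n pt \<Rightarrow> 'n pt) monoid)\<lparr>carrier := TTgroup\<rparr>)"
    unfolding iso_def bij_betw_def using hom inj img by (intro exI[of _ \<phi>] CollectI conjI)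
next
  show "\<forall>\<Lambda>1 \<Lambda>2 :: 'n set. restrict (TT \<Lambda>1) DD \<otimes>\<^bsub>Aut\<^esub> restrict (TT \<Lambda>2) DD
           = restrict (TT (symdiff \<Lambda>1 \<Lambda>2)) DD"
    by (intro allI RR_mult)
next
  show "\<forall>\<Lambda> :: 'n set. \<forall>\<epsilon> \<in> EE. \<epsilon> \<circ> TT \<Lambda> \<in> EE" by (intro allI ballI EE_TT)
next
  show "\<forall>\<Lambda> :: 'n set. \<forall>w a \<theta> u. (w, a, \<theta>) \<in> DD
          \<longrightarrow> (\<forall>l. ee (of_real (\<theta> l)) * exp (- u * a l) \<noteq> 1)
          \<longrightarrow> FF u (TT \<Lambda> (w, a, \<theta>))
              = (-1) ^ card \<Lambda> * ee (of_real (\<Sum>l\<in>\<Lambda>. \<theta> l)) * FF u (w, a, \<theta>)"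
    apply (intro allI impI)
    apply (rule FF_TT)
    apply assumption
    done
qed

end
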